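(* For every Clifford circuit $\mathcal C$ and all fault operators $F,G$ of $\mathcal C$, $[\overrightarrow F,G]=[F,\overleftarrow G]$.
   Context: A Clifford circuit on $n$ qubits is a finite sequence of operations, each a unitary Clifford gate or a Pauli measurement, each with a level in $\{1,2,\dots\}$, operations of equal level having disjoint supports; the depth $\Delta$ is the maximal level. $\overline{\mathcal P}_N$ is the $N$-qubit Pauli group modulo phases; for Paulis $P,Q$, $[P,Q]\in\mathbb Z_2$ is $0$ if they commute and $1$ otherwise. For $1\le\ell\le\Delta$, $U_\ell$ is the product of all unitary gates of level $\ell$ (identity if none). A fault operator is $F\in\overline{\mathcal P}_{n(\Delta+1)}$ acting on qubits $(\ell+0.5,q)$, $0\le\ell\le\Delta$, $1\le q\le n$; $F_{\ell+0.5}\in\overline{\mathcal P}_n$ is its component on level $\ell+0.5$. Cumulant $\overrightarrow F$: start with $\overrightarrow F=F$; for $\ell=1,\dots,\Delta$ in increasing order replace $\overrightarrow F_{\ell+0.5}$ by $\overrightarrow F_{\ell+0.5}\cdot U_\ell\overrightarrow F_{\ell-0.5}U_\ell^{-1}$. Back-cumulant $\overleftarrow F$: start with $\overleftarrow F=F$; for $\ell=\Delta,\dots,1$ in decreasing order replace $\overleftarrow F_{\ell-0.5}$ by $\overleftarrow F_{\ell-0.5}\cdot U_\ell^{-1}\overleftarrow F_{\ell+0.5}U_\ell$. *)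

theory Defs
  imports Main
begin

text \<open>A Pauli operator modulo phases on qubits indexed by nat, in symplectic
(X-part, Z-part) representation: qubit q carries I=(False,False), X=(True,False),
Z=(False,True), Y=(True,True).\<close>
type_synonym pauli = "nat \<Rightarrow> bool \<times> bool"

definition paulis :: "nat \<Rightarrow> pauli set" where
  "paulis n = {P. \<forall>q\<ge>n. P q = (False, False)}"

definition pmult :: "pauli \<Rightarrow> pauli \<Rightarrow> pauli" where
  "pmult P Q = (\<lambda>q. (fst (P q) \<noteq> fst (Q q), snd (P q) \<noteq> snd (Q q)))"

definition anti1 :: "bool \<times> bool \<Rightarrow> bool \<times> bool \<Rightarrow> bool" where
  "anti1 a b = ((fst a \<and> snd b) \<noteq> (snd a \<and> fst b))"

text \<open>Commutator [P,Q] in Z_2 (True = 1 = anticommute) for n-qubit Paulis.\<close>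
definition pcomm :: "nat \<Rightarrow> pauli \<Rightarrow> pauli \<Rightarrow> bool" where
  "pcomm n P Q = odd (card {q. q < n \<and> anti1 (P q) (Q q)})"

text \<open>Conjugation P |-> U P U^-1 by an n-qubit Clifford unitary U, viewed modulo phases:
a bijection of the n-qubit Paulis that is multiplicative and preserves commutators.\<close>
definition clifford_action :: "nat \<Rightarrow> (pauli \<Rightarrow> pauli) \<Rightarrow> bool" where
  "clifford_action n f \<longleftrightarrow> bij_betw f (paulis n) (paulis n)
     \<and> (\<forall>P\<in>paulis n. \<forall>Q\<in>paulis n. f (pmult P Q) = pmult (f P) (f Q))
     \<and> (\<forall>P\<in>paulis n. \<forall>Q\<in>paulis n. pcomm n (f P) (f Q) = pcomm n P Q)"

definition inv_action :: "nat \<Rightarrow> (pauli \<Rightarrow> pauli) \<Rightarrow> pauli \<Rightarrow> pauli" where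
  "inv_action n f = inv_into (paulis n) f"

text \<open>Fault operators: F :: nat => pauli, F l is the component on level l+0.5
(0 <= l <= Delta).  A fault operator is valid if each component is an n-qubit Pauli.\<close>
definition fault_op :: "nat \<Rightarrow> nat \<Rightarrow> (nat \<Rightarrow> pauli) \<Rightarrow> bool" where
  "fault_op n \<Delta> F \<longleftrightarrow> (\<forall>l\<le>\<Delta>. F l \<in> paulis n)"

definition fcomm :: "nat \<Rightarrow> nat \<Rightarrow> (nat \<Rightarrow> pauli) \<Rightarrow> (nat \<Rightarrow> pauli) \<Rightarrow> bool" where
  "fcomm n \<Delta> F G = odd (card {(l, q). l \<le> \<Delta> \<and> q < n \<and> anti1 (F l q) (G l q)})"

text \<open>Cumulant: U l is the conjugation action of U_l (l = 1..Delta).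
cumulant U F l is the component on level l+0.5.\<close>
fun cumulant :: "(nat \<Rightarrow> pauli \<Rightarrow> pauli) \<Rightarrow> (nat \<Rightarrow> pauli) \<Rightarrow> nat \<Rightarrow> pauli" where
  "cumulant U F 0 = F 0"
| "cumulant U F (Suc l) = pmult (F (Suc l)) (U (Suc l) (cumulant U F l))"

text \<open>Back-cumulant; back_aux ... k is the component on level (Delta-k)+0.5.\<close>
fun back_aux :: "nat \<Rightarrow> (nat \<Rightarrow> pauli \<Rightarrow> pauli) \<Rightarrow> nat \<Rightarrow> (nat \<Rightarrow> pauli) \<Rightarrow> nat \<Rightarrow> pauli" where
  "back_aux n U \<Delta> F 0 = F \<Delta>"
| "back_aux n U \<Delta> F (Suc k) =
     pmult (F (\<Delta> - Suc k)) (inv_action n (U (\<Delta> - k)) (back_aux n U \<Delta> F k))"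

definition back_cumulant :: "nat \<Rightarrow> (nat \<Rightarrow> pauli \<Rightarrow> pauli) \<Rightarrow> nat \<Rightarrow> (nat \<Rightarrow> pauli) \<Rightarrow> nat \<Rightarrow> pauli" where
  "back_cumulant n U \<Delta> F l = back_aux n U \<Delta> F (\<Delta> - l)"

end

theory Submission
  imports Defs
begin

lemma card_xor:
  "odd (card {q. q < (n::nat) \<and> (P q \<noteq> Q q)}) =
   (odd (card {q. q < n \<and> P q}) \<noteq> odd (card {q. q < n \<and> Q q}))"
proof (induction n)
  case 0
  then show ?case by simp
next
  case (Suc n)
  have e: "\<And>R. {q. q < Suc n \<and> R q} = {q. q < n \<and> R q} \<union> (if R n then {n} else {})"
    by (auto simp: less_Suc_eq)
  have c: "\<And>R. card {q. q < Suc n \<and> R q} = card {q. q < n \<and> R q} + (if R n then 1 else 0)"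
    unfolding e by (auto simp: card_insert_if)
  show ?case using Suc.IH by (cases "P n"; cases "Q n"; simp add: c)
qed

lemma pcomm_mult1: "pcomm n (pmult P Q) R = (pcomm n P R \<noteq> pcomm n Q R)"
proof -
  have "\<And>q. anti1 (pmult P Q q) (R q) = (anti1 (P q) (R q) \<noteq> anti1 (Q q) (R q))"
    by (auto simp: anti1_def pmult_def)
  then show ?thesis unfolding pcomm_def
    using card_xor[of n "\<lambda>q. anti1 (P q) (R q)" "\<lambda>q. anti1 (Q q) (R q)"] by simp
qed

lemma pcomm_mult2: "pcomm n R (pmult P Q) = (pcomm n R P \<noteq> pcomm n R Q)"
proof -
  have "\<And>q. anti1 (R q) (pmult P Q q) = (anti1 (R q) (P q) \<noteq> anti1 (R q) (Q q))"
    by (auto simp: anti1_def pmult_def)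
  then show ?thesis unfolding pcomm_def
    using card_xor[of n "\<lambda>q. anti1 (R q) (P q)" "\<lambda>q. anti1 (R q) (Q q)"] by simp
qed

lemma pmult_paulis: "P \<in> paulis n \<Longrightarrow> Q \<in> paulis n \<Longrightarrow> pmult P Q \<in> paulis n"
  by (auto simp: paulis_def pmult_def)

lemma fcomm_0: "fcomm n 0 F G = pcomm n (F 0) (G 0)"
proof -
  have "{(l, q). l \<le> (0::nat) \<and> q < n \<and> anti1 (F l q) (G l q)} = (\<lambda>q. (0, q)) ` {q. q < n \<and> anti1 (F 0 q) (G 0 q)}"
    by auto
  moreover have "inj (\<lambda>q. (0::nat, q))" by (auto simp: inj_def)
  ultimately show ?thesis unfolding fcomm_def pcomm_def
    by (simp add: card_image inj_on_def)
qed

lemma fcomm_Suc: "fcomm n (Suc d) F G = (fcomm n d F G \<noteq> pcomm n (F (Suc d)) (G (Suc d)))"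
proof -
  let ?A = "{(l, q). l \<le> d \<and> q < n \<and> anti1 (F l q) (G l q)}"
  let ?B = "(\<lambda>q. (Suc d, q)) ` {q. q < n \<and> anti1 (F (Suc d) q) (G (Suc d) q)}"
  have e: "{(l, q). l \<le> Suc d \<and> q < n \<and> anti1 (F l q) (G l q)} = ?A \<union> ?B"
    by (auto simp: le_Suc_eq)
  have fA: "finite ?A"
    by (rule finite_subset[of _ "{..d} \<times> {..<n}"]) auto
  have fB: "finite ?B" by simp
  have d: "?A \<inter> ?B = {}" by auto
  have cB: "card ?B = card {q. q < n \<and> anti1 (F (Suc d) q) (G (Suc d) q)}"
    by (simp add: card_image inj_on_def)
  show ?thesis unfolding fcomm_def pcomm_def e
    using card_Un_disjoint[OF fA fB d] cB by simp
qed

lemma fcomm_cong: "(\<And>l. l \<le> d \<Longrightarrow> F l = F' l) \<Longrightarrow> (\<And>l. l \<le> d \<Longrightarrow> G l = G' l)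
  \<Longrightarrow> fcomm n d F G = fcomm n d F' G'"
  unfolding fcomm_def
  by (rule arg_cong[where f="\<lambda>S. odd (card S)"]) auto

lemma fcomm_upd:
  "fcomm n d F (G(d := pmult (G d) X)) = (fcomm n d F G \<noteq> pcomm n (F d) X)"
proof (cases d)
  case 0
  then show ?thesis by (simp add: fcomm_0 pcomm_mult2)
next
  case (Suc m)
  have "fcomm n m F (G(d := pmult (G d) X)) = fcomm n m F G"
    by (rule fcomm_cong) (auto simp: Suc)
  then show ?thesis using Suc by (simp add: fcomm_Suc pcomm_mult2) blast
qed

lemma cum_paulis:
  assumes "\<forall>l\<in>{1..d}. clifford_action n (U l)" "fault_op n d F"
  shows "l \<le> d \<Longrightarrow> cumulant U F l \<in> paulis n"
proof (induction l)
  case 0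
  then show ?case using assms(2) by (simp add: fault_op_def)
next
  case (Suc l)
  have "clifford_action n (U (Suc l))" using assms(1) Suc.prems by auto
  then have "U (Suc l) (cumulant U F l) \<in> paulis n"
    using Suc by (auto simp: clifford_action_def bij_betw_def)
  then show ?case using Suc.prems assms(2)
    by (auto simp: fault_op_def intro!: pmult_paulis)
qed

lemma back_shift:
  "k \<le> d \<Longrightarrow> back_aux n U (Suc d) G (Suc k) =
     back_aux n U d (G(d := pmult (G d) (inv_action n (U (Suc d)) (G (Suc d))))) k"
proof (induction k)
  case 0
  then show ?case by simp
next
  case (Suc k)
  have "d - Suc k \<noteq> d" using Suc.prems by simp
  then show ?case using Suc by (simp add: Suc_diff_Suc)
qed

theorem mainTheorem8:
  fixes n \<Delta> :: nat and U :: "nat \<Rightarrow> pauli \<Rightarrow> pauli" and F G :: "nat \<Rightarrow> pauli"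
  assumes "\<forall>l\<in>{1..\<Delta>}. clifford_action n (U l)"
    and "fault_op n \<Delta> F" and "fault_op n \<Delta> G"
  shows "fcomm n \<Delta> (cumulant U F) G = fcomm n \<Delta> F (back_cumulant n U \<Delta> G)"
  using assms
proof (induction \<Delta> arbitrary: G)
  case 0
  then show ?case by (simp add: fcomm_0 back_cumulant_def)
next
  case (Suc d)
  let ?V = "U (Suc d)"
  let ?W = "inv_action n ?V"
  define G' where "G' = G(d := pmult (G d) (?W (G (Suc d))))"
  have cl: "clifford_action n ?V" using Suc.prems(1) by auto
  then have bij: "bij_betw ?V (paulis n) (paulis n)" by (simp add: clifford_action_def)
  have GS: "G (Suc d) \<in> paulis n" using Suc.prems(3) by (simp add: fault_op_def)
  have Wp: "?W (G (Suc d)) \<in> paulis n"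
    unfolding inv_action_def using bij GS
    by (metis bij_betw_def inv_into_into)
  have VW: "?V (?W (G (Suc d))) = G (Suc d)"
    unfolding inv_action_def using bij GS
    by (metis bij_betw_def f_inv_into_f)
  have cd: "cumulant U F d \<in> paulis n"
    using cum_paulis[of "Suc d" n U F d] Suc.prems by simp
  have key: "pcomm n (?V (cumulant U F d)) (G (Suc d)) = pcomm n (cumulant U F d) (?W (G (Suc d)))"
    using cl cd Wp VW unfolding clifford_action_def by metis
  have fG': "fault_op n d G'"
    using Suc.prems(3) Wp unfolding fault_op_def G'_def
    by (auto intro!: pmult_paulis)
  have IH: "fcomm n d (cumulant U F) G' = fcomm n d F (back_cumulant n U d G')"
    using Suc.IH[OF _ _ fG'] Suc.prems by (auto simp: fault_op_def)
  have b: "fcomm n d F (back_cumulant n U (Suc d) G) = fcomm n d F (back_cumulant n U d G')"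
  proof (rule fcomm_cong)
    fix l assume "l \<le> d"
    then have "back_aux n U (Suc d) G (Suc d - l) = back_aux n U d G' (d - l)"
      using back_shift[of "d - l" d n U G] by (simp only: Suc_diff_le G'_def)
    then show "back_cumulant n U (Suc d) G l = back_cumulant n U d G' l"
      by (simp only: back_cumulant_def)
  qed simp
  have "fcomm n (Suc d) (cumulant U F) G
      = (fcomm n d (cumulant U F) G \<noteq> (pcomm n (F (Suc d)) (G (Suc d)) \<noteq>
           pcomm n (cumulant U F d) (?W (G (Suc d)))))"
    by (simp add: fcomm_Suc pcomm_mult1 key)
  also have "\<dots> = (fcomm n d (cumulant U F) G' \<noteq> pcomm n (F (Suc d)) (G (Suc d)))"
    unfolding G'_def fcomm_upd by auto
  also have "\<dots> = fcomm n (Suc d) F (back_cumulant n U (Suc d) G)"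
    by (simp add: fcomm_Suc IH b back_cumulant_def)
  finally show ?case .
qed

end
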